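(* Assume $d'=1$, $t\ge2$, and $a<d$. Fix $n\ne j$ in $[t]$ and let $F_{n,j}$ be the $\binom{d+1}2\times d$ matrix with rows indexed by $\{k_1,k_2\}\in\operatorname{Mult}_2([d])$, columns by $k_3\in[d]$, and entries $(F_{n,j})_{\{k_1,k_2\},k_3}=y_{n,j}(\{k_1,k_2\},k_3)$. Then $\operatorname{rank}F_{n,j}(\mu(W))\le a$ for all $W$. Consequently all $\binom{\binom{d+1}{2}}{a+1}\binom{d}{a+1}$ minors of size $(a+1)\times(a+1)$ of $F_{n,j}$, homogeneous polynomials of degree $a+1$, vanish on the attention variety.
   Context: Setup: $Q,K\in\mathbb R^{a\times d}$, $V\in\mathbb R^{1\times d}$, $A=K^\top Q$ (so $\operatorname{rank}A\le a$), $\varphi_W(X)=VX(X^\top AX)$ for $X=(x_{kn})\in\mathbb R^{d\times t}$. For $\mathcal A\in\operatorname{Mult}_2([d])$ (size-2 multisets on $[d]$), $b\in[d]$, $n\ne j$: $c_{n,j}(\mathcal A,b)$ is the coefficient of $(\prod_{u\in\mathcal A}x_{un})x_{bj}$ in $\varphi_W(X)[1,j]$ and $y_{n,j}(\mathcal A,b)=c_{n,j}(\mathcal A,b)/|\operatorname{Perm}(\mathcal A)|$, $\operatorname{Perm}$ being the set of distinct orderings. $\mu$ maps $W=(Q,K,V)$ to all scaled coefficients (ambient coordinates with the same names); the attention variety is the Zariski closure of $\operatorname{im}\mu$. *)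

theory Defs
  imports "HOL-Library.Poly_Mapping" "HOL-Combinatorics.Multiset_Permutations"
    "Jordan_Normal_Form.DL_Rank" "Jordan_Normal_Form.DL_Submatrix"
begin

(* Indices are 0-based: [d] = {0..<d}, [t] = {0..<t}.
   Parameters: Q K :: nat => nat => real (a x d, entries Q i k, i<a, k<d),
   V :: nat => real (1 x d, entries V k, k<d). *)

type_synonym 'v mpoly = "('v \<Rightarrow>\<^sub>0 nat) \<Rightarrow>\<^sub>0 real"

definition mpoly_eval :: "'v mpoly \<Rightarrow> ('v \<Rightarrow> real) \<Rightarrow> real" where
  "mpoly_eval f x = (\<Sum>mo\<in>Poly_Mapping.keys f. Poly_Mapping.lookup f mo *
     (\<Prod>v\<in>Poly_Mapping.keys mo. x v ^ Poly_Mapping.lookup mo v))"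

definition mconst :: "real \<Rightarrow> 'v mpoly" where
  "mconst c = Poly_Mapping.single 0 c"

definition mvar :: "'v \<Rightarrow> 'v mpoly" where
  "mvar v = Poly_Mapping.single (Poly_Mapping.single v 1) 1"

definition attA :: "nat \<Rightarrow> (nat \<Rightarrow> nat \<Rightarrow> real) \<Rightarrow> (nat \<Rightarrow> nat \<Rightarrow> real) \<Rightarrow> nat \<Rightarrow> nat \<Rightarrow> real" where
  "attA a Q K p q = (\<Sum>i<a. K i p * Q i q)"

(* phi_W(X)[1,j] = sum_m (V X)[1,m] * (X^T A X)[m,j], as a polynomial in the
   entries x_(k,m) of X (variable (k,m) stands for x_{km}, k<d, m<t) *)
definition phi_entry :: "nat \<Rightarrow> nat \<Rightarrow> nat \<Rightarrow> (nat \<Rightarrow> nat \<Rightarrow> real) \<Rightarrow> (nat \<Rightarrow> nat \<Rightarrow> real)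
      \<Rightarrow> (nat \<Rightarrow> real) \<Rightarrow> nat \<Rightarrow> (nat \<times> nat) mpoly" where
  "phi_entry a d t Q K V j =
     (\<Sum>m<t. (\<Sum>k<d. mconst (V k) * mvar (k, m)) *
             (\<Sum>p<d. \<Sum>q<d. mvar (p, m) * mconst (attA a Q K p q) * mvar (q, j)))"

definition coeff_monomial :: "nat multiset \<Rightarrow> nat \<Rightarrow> nat \<Rightarrow> nat \<Rightarrow> (nat \<times> nat) \<Rightarrow>\<^sub>0 nat" where
  "coeff_monomial AA b n j = (\<Sum>u\<in>#AA. Poly_Mapping.single (u, n) 1) + Poly_Mapping.single (b, j) 1"

definition Mult2 :: "nat \<Rightarrow> nat multiset set" where
  "Mult2 d = {M. size M = 2 \<and> set_mset M \<subseteq> {..<d}}"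

definition c_coef :: "nat \<Rightarrow> nat \<Rightarrow> nat \<Rightarrow> (nat \<Rightarrow> nat \<Rightarrow> real) \<Rightarrow> (nat \<Rightarrow> nat \<Rightarrow> real)
      \<Rightarrow> (nat \<Rightarrow> real) \<Rightarrow> nat \<Rightarrow> nat \<Rightarrow> nat multiset \<Rightarrow> nat \<Rightarrow> real" where
  "c_coef a d t Q K V n j AA b = Poly_Mapping.lookup (phi_entry a d t Q K V j) (coeff_monomial AA b n j)"

definition y_coef :: "nat \<Rightarrow> nat \<Rightarrow> nat \<Rightarrow> (nat \<Rightarrow> nat \<Rightarrow> real) \<Rightarrow> (nat \<Rightarrow> nat \<Rightarrow> real)
      \<Rightarrow> (nat \<Rightarrow> real) \<Rightarrow> nat \<Rightarrow> nat \<Rightarrow> nat multiset \<Rightarrow> nat \<Rightarrow> real" where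
  "y_coef a d t Q K V n j AA b =
     c_coef a d t Q K V n j AA b / real (card (permutations_of_multiset AA))"

(* ambient coordinates: (n, j, AA, b) with n \<noteq> j in [t], AA in Mult_2([d]), b in [d] *)
type_synonym coord = "nat \<times> nat \<times> nat multiset \<times> nat"

definition coords :: "nat \<Rightarrow> nat \<Rightarrow> coord set" where
  "coords d t = {(n, j, AA, b). n < t \<and> j < t \<and> n \<noteq> j \<and> AA \<in> Mult2 d \<and> b < d}"

(* the parametrization mu; points of the ambient space are functions on coord,
   zero outside the index set coords d t *)
definition mu :: "nat \<Rightarrow> nat \<Rightarrow> nat \<Rightarrow> (nat \<Rightarrow> nat \<Rightarrow> real) \<times> (nat \<Rightarrow> nat \<Rightarrow> real) \<times> (nat \<Rightarrow> real)
      \<Rightarrow> coord \<Rightarrow> real" where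
  "mu a d t W = (\<lambda>(n, j, AA, b).
     if (n, j, AA, b) \<in> coords d t
     then (case W of (Q, K, V) \<Rightarrow> y_coef a d t Q K V n j AA b) else 0)"

definition zariski_closure :: "('v \<Rightarrow> real) set \<Rightarrow> ('v \<Rightarrow> real) set" where
  "zariski_closure S = {p. \<forall>f :: 'v mpoly. (\<forall>x\<in>S. mpoly_eval f x = 0) \<longrightarrow> mpoly_eval f p = 0}"

definition attention_variety :: "nat \<Rightarrow> nat \<Rightarrow> nat \<Rightarrow> (coord \<Rightarrow> real) set" where
  "attention_variety a d t = zariski_closure (range (mu a d t))"

definition mult2_list :: "nat \<Rightarrow> nat multiset list" where
  "mult2_list d = concat (map (\<lambda>k1. map (\<lambda>k2. {#k1, k2#}) [k1..<d]) [0..<d])"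

definition Fmat :: "nat \<Rightarrow> nat \<Rightarrow> nat \<Rightarrow> (coord \<Rightarrow> real) \<Rightarrow> real mat" where
  "Fmat d n j p = mat (length (mult2_list d)) d (\<lambda>(r, c). p (n, j, mult2_list d ! r, c))"

end

theory Submission
  imports Defs
begin


definition monval :: "('v \<Rightarrow>\<^sub>0 nat) \<Rightarrow> ('v \<Rightarrow> real) \<Rightarrow> real" where
  "monval mo x = (\<Prod>v\<in>Poly_Mapping.keys mo. x v ^ Poly_Mapping.lookup mo v)"

lemma monval_superset:
  assumes "finite S" "Poly_Mapping.keys mo \<subseteq> S"
  shows "monval mo x = (\<Prod>v\<in>S. x v ^ Poly_Mapping.lookup mo v)"
  unfolding monval_def
  by (rule prod.mono_neutral_left[OF assms]) (auto simp: in_keys_iff)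

lemma monval_add: "monval (m1 + m2) x = monval m1 x * monval m2 x"
proof -
  let ?S = "Poly_Mapping.keys m1 \<union> Poly_Mapping.keys m2"
  have "monval (m1 + m2) x = (\<Prod>v\<in>?S. x v ^ Poly_Mapping.lookup (m1+m2) v)"
    by (rule monval_superset) (use keys_add[of m1 m2] in auto)
  also have "\<dots> = (\<Prod>v\<in>?S. x v ^ Poly_Mapping.lookup m1 v) * (\<Prod>v\<in>?S. x v ^ Poly_Mapping.lookup m2 v)"
    by (simp add: lookup_add power_add prod.distrib)
  also have "\<dots> = monval m1 x * monval m2 x"
    by (subst (1 2) monval_superset[symmetric]) auto
  finally show ?thesis .
qed

lemma monval_zero[simp]: "monval 0 x = 1" unfolding monval_def by simp

lemma monval_single[simp]: "monval (Poly_Mapping.single v 1) x = x v"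
  unfolding monval_def by simp

lemma eval_superset:
  assumes "finite S" "Poly_Mapping.keys f \<subseteq> S"
  shows "mpoly_eval f x = (\<Sum>mo\<in>S. Poly_Mapping.lookup f mo * monval mo x)"
  unfolding mpoly_eval_def monval_def[symmetric]
  by (rule sum.mono_neutral_left[OF assms]) (auto simp: in_keys_iff)

lemma eval_add: "mpoly_eval (f + g) x = mpoly_eval f x + mpoly_eval g x"
proof -
  let ?S = "Poly_Mapping.keys f \<union> Poly_Mapping.keys g"
  have "mpoly_eval (f + g) x = (\<Sum>mo\<in>?S. Poly_Mapping.lookup (f+g) mo * monval mo x)"
    by (rule eval_superset) (use keys_add[of f g] in auto)
  also have "\<dots> = (\<Sum>mo\<in>?S. Poly_Mapping.lookup f mo * monval mo x) + (\<Sum>mo\<in>?S. Poly_Mapping.lookup g mo * monval mo x)"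
    by (simp add: lookup_add distrib_right sum.distrib)
  also have "\<dots> = mpoly_eval f x + mpoly_eval g x"
    by (subst (1 2) eval_superset) auto
  finally show ?thesis .
qed

lemma eval_zero[simp]: "mpoly_eval 0 x = 0" unfolding mpoly_eval_def by simp

lemma eval_single: "mpoly_eval (Poly_Mapping.single mo c) x = c * monval mo x"
  by (subst eval_superset[of "{mo}"]) auto

lemma eval_sum: "mpoly_eval (\<Sum>i\<in>A. f i) x = (\<Sum>i\<in>A. mpoly_eval (f i) x)"
  by (induction A rule: infinite_finite_induct) (auto simp: eval_add)

lemma pm_sum_single: "f = (\<Sum>k\<in>Poly_Mapping.keys f. Poly_Mapping.single k (Poly_Mapping.lookup f k))"
  by (rule poly_mapping_eqI) (auto simp: lookup_sum lookup_single when_def in_keys_iff)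

lemma eval_mult: "mpoly_eval (f * g) x = mpoly_eval f x * mpoly_eval g x"
proof -
  let ?F = "Poly_Mapping.keys f" and ?G = "Poly_Mapping.keys g"
  have "f * g = (\<Sum>k\<in>?F. Poly_Mapping.single k (Poly_Mapping.lookup f k)) *
                (\<Sum>l\<in>?G. Poly_Mapping.single l (Poly_Mapping.lookup g l))"
    by (subst (1) pm_sum_single, subst (1) pm_sum_single[of g]) (rule refl)
  also have "\<dots> = (\<Sum>k\<in>?F. \<Sum>l\<in>?G. Poly_Mapping.single (k + l) (Poly_Mapping.lookup f k * Poly_Mapping.lookup g l))"
    by (simp add: sum_product mult_single)
  finally have "mpoly_eval (f * g) x = (\<Sum>k\<in>?F. \<Sum>l\<in>?G. (Poly_Mapping.lookup f k * monval k x) * (Poly_Mapping.lookup g l * monval l x))"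
    by (simp add: eval_sum eval_single monval_add mult_ac)
  also have "\<dots> = mpoly_eval f x * mpoly_eval g x"
    by (simp add: sum_product mpoly_eval_def monval_def)
  finally show ?thesis .
qed

lemma eval_prod: "mpoly_eval (\<Prod>i\<in>A. f i) x = (\<Prod>i\<in>A. mpoly_eval (f i) x)"
  by (induction A rule: infinite_finite_induct) (auto simp: eval_mult eval_single simp flip: single_one)

lemma eval_mconst[simp]: "mpoly_eval (mconst c) x = c"
  unfolding mconst_def by (simp add: eval_single)

lemma eval_mvar[simp]: "mpoly_eval (mvar v) x = x v"
  unfolding mvar_def eval_single monval_single by simp

lemma det_poly:
  fixes M :: "('v \<Rightarrow> real) \<Rightarrow> real mat"
  assumes dims: "\<And>x. dim_row (M x) = nr" "\<And>x. dim_col (M x) = nc"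
    and ent: "\<And>i k. i < nr \<Longrightarrow> k < nc \<Longrightarrow> \<exists>f. \<forall>x. M x $$ (i,k) = mpoly_eval f x"
  shows "\<exists>f. \<forall>x. det (M x) = mpoly_eval f x"
proof -
  from ent obtain fe where fe: "\<And>i k x. i < nr \<Longrightarrow> k < nc \<Longrightarrow> M x $$ (i,k) = mpoly_eval (fe i k) x"
    by metis
  show ?thesis
  proof (cases "nr = nc")
    case False
    then show ?thesis by (intro exI[of _ 0]) (auto simp: det_def dims)
  next
    case True
    let ?f = "\<Sum>p\<in>{p. p permutes {0..<nr}}. mconst (of_int (sign p)) * (\<Prod>i=0..<nr. fe i (p i))"
    show ?thesis
    proof (intro exI[of _ ?f] allI)
      fix x
      have "det (M x) = (\<Sum>p\<in>{p. p permutes {0..<nr}}. of_int (sign p) * (\<Prod>i=0..<nr. M x $$ (i, p i)))"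
        using True by (simp add: det_def dims)
      also have "\<dots> = mpoly_eval ?f x"
        unfolding eval_sum eval_mult eval_prod eval_mconst
      proof (intro sum.cong refl arg_cong2[where f="(*)"] prod.cong)
        fix p i assume "p \<in> {p. p permutes {0..<nr}}" "i \<in> {0..<nr}"
        then have "p i < nr" using permutes_in_image by fastforce
        then show "M x $$ (i, p i) = mpoly_eval (fe i (p i)) x" using fe \<open>i \<in> _\<close> True by auto
      qed
      finally show "det (M x) = mpoly_eval ?f x" .
    qed
  qed
qed



lemma rank_sum_le:
  fixes f g :: "nat \<Rightarrow> nat \<Rightarrow> real"
  assumes "M \<in> carrier_mat nr nc"
    and "\<And>r c. r < nr \<Longrightarrow> c < nc \<Longrightarrow> M $$ (r,c) = (\<Sum>i<a. f i r * g i c)"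
  shows "vec_space.rank nr M \<le> a"
  using assms
proof (induction a arbitrary: M)
  case 0
  interpret vec_space "TYPE(real)" nr .
  have "M = 0\<^sub>m nr nc" using 0 by (intro eq_matI) auto
  then show ?case using rank_0I by simp
next
  case (Suc a)
  interpret vec_space "TYPE(real)" nr .
  define M1 where "M1 = mat nr nc (\<lambda>(r,c). \<Sum>i<a. f i r * g i c)"
  define M2 where "M2 = mat nr nc (\<lambda>(r,c). f a r * g a c)"
  have M1: "M1 \<in> carrier_mat nr nc" and M2: "M2 \<in> carrier_mat nr nc" unfolding M1_def M2_def by auto
  have "M = M1 + M2" using Suc.prems unfolding M1_def M2_def by (intro eq_matI) auto
  moreover have "rank M1 \<le> a" using Suc.IH[OF M1] unfolding M1_def by auto
  moreover have "rank M2 \<le> 1" using rank_le_1_product_entries[OF M2, of "f a" "g a"] unfolding M2_def by auto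
  ultimately show ?case using rank_subadditive[OF M1 M2] by simp
qed

lemma det_sum_zero:
  fixes f g :: "nat \<Rightarrow> nat \<Rightarrow> real"
  assumes "M \<in> carrier_mat (Suc a) (Suc a)"
    and "\<And>r c. r < Suc a \<Longrightarrow> c < Suc a \<Longrightarrow> M $$ (r,c) = (\<Sum>i<a. f i r * g i c)"
  shows "det M = 0"
proof -
  interpret vec_space "TYPE(real)" "Suc a" .
  have "rank M \<le> a" using rank_sum_le[OF assms] .
  then show ?thesis using det_rank_iff[OF assms(1)] by auto
qed



abbreviation sg :: "nat \<times> nat \<Rightarrow> (nat \<times> nat) \<Rightarrow>\<^sub>0 nat" where
  "sg v \<equiv> Poly_Mapping.single v 1"

lemma sum3_mult: "(\<Sum>k\<in>A. f k) * (\<Sum>p\<in>B. \<Sum>q\<in>C. g p q) = (\<Sum>k\<in>A. \<Sum>p\<in>B. \<Sum>q\<in>C. (f k * g p q :: 'z::comm_semiring_0))"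
  unfolding sum_distrib_right unfolding sum_distrib_left ..

lemma phi_expand:
  "phi_entry a d t Q K V j = (\<Sum>m<t. \<Sum>k<d. \<Sum>p<d. \<Sum>q<d.
      Poly_Mapping.single (sg (k,m) + sg (p,m) + sg (q,j)) (V k * attA a Q K p q))"
  unfolding phi_entry_def sum3_mult
  by (intro sum.cong refl) (simp add: mconst_def mvar_def mult_single add_ac)

lemma lookup_sg: "Poly_Mapping.lookup (sg v) w = (if v = w then 1 else 0)"
  by (simp add: lookup_single when_def)

lemma mon_eq:
  assumes "n \<noteq> j"
  shows "(sg (k,m) + sg (p,m) + sg (q,j) = sg (k1,n) + sg (k2,n) + sg (b,j)) \<longleftrightarrow>
         (m = n \<and> q = b \<and> ((k = k1 \<and> p = k2) \<or> (k = k2 \<and> p = k1)))"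
proof
  assume E: "sg (k,m) + sg (p,m) + sg (q,j) = sg (k1,n) + sg (k2,n) + sg (b,j)"
  have "Poly_Mapping.lookup (sg (k,m) + sg (p,m) + sg (q,j)) (q,j) =
        Poly_Mapping.lookup (sg (k1,n) + sg (k2,n) + sg (b,j)) (q,j)" using E by simp
  then have qb: "q = b" using assms by (auto simp: lookup_add lookup_single when_def split: if_splits)
  with E have E2: "sg (k,m) + sg (p,m) = sg (k1,n) + sg (k2,n)" by simp
  have "Poly_Mapping.lookup (sg (k,m) + sg (p,m)) (k,m) =
        Poly_Mapping.lookup (sg (k1,n) + sg (k2,n)) (k,m)" using E2 by simp
  then have mn: "m = n" and kk: "k = k1 \<or> k = k2" by (auto simp: lookup_add lookup_single when_def split: if_splits)
  show "m = n \<and> q = b \<and> ((k = k1 \<and> p = k2) \<or> (k = k2 \<and> p = k1))"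
  proof (cases "k = k1")
    case True
    with E2 mn have "sg (p,n) = sg (k2,n)" by simp
    then have "Poly_Mapping.lookup (sg (p,n)) (p,n) = Poly_Mapping.lookup (sg (k2,n)) (p,n)" by simp
    then have "p = k2" by (auto simp: lookup_single when_def split: if_splits)
    then show ?thesis using True mn qb by simp
  next
    case False
    with kk have "k = k2" by simp
    with E2 mn have "sg (p,n) + sg (k2,n) = sg (k1,n) + sg (k2,n)" by (metis add.commute)
    then have "sg (p,n) = sg (k1,n)" by simp
    then have "Poly_Mapping.lookup (sg (p,n)) (p,n) = Poly_Mapping.lookup (sg (k1,n)) (p,n)" by simp
    then have "p = k1" by (auto simp: lookup_single when_def split: if_splits)
    then show ?thesis using \<open>k = k2\<close> mn qb by simp
  qed
next
  assume "m = n \<and> q = b \<and> ((k = k1 \<and> p = k2) \<or> (k = k2 \<and> p = k1))"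
  then show "sg (k,m) + sg (p,m) + sg (q,j) = sg (k1,n) + sg (k2,n) + sg (b,j)"
    by (auto simp: add_ac)
qed

lemma c_coef_val:
  assumes "n \<noteq> j" "n < t" "k1 < d" "k2 < d" "b < d"
  shows "c_coef a d t Q K V n j {#k1,k2#} b =
    (if k1 = k2 then V k1 * attA a Q K k1 b else V k1 * attA a Q K k2 b + V k2 * attA a Q K k1 b)"
proof -
  have cm: "coeff_monomial {#k1,k2#} b n j = sg (k1,n) + sg (k2,n) + sg (b,j)"
    unfolding coeff_monomial_def by (simp add: add_ac)
  have "c_coef a d t Q K V n j {#k1,k2#} b = (\<Sum>m<t. \<Sum>k<d. \<Sum>p<d. \<Sum>q<d.
      (if m = n then (if q = b then (if (k = k1 \<and> p = k2) \<or> (k = k2 \<and> p = k1) then V k * attA a Q K p q else 0) else 0) else 0))"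
    unfolding c_coef_def phi_expand cm lookup_sum
    by (intro sum.cong refl) (simp only: lookup_single when_def mon_eq[OF assms(1)], auto)
  also have "\<dots> = (\<Sum>m<t. (if m = n then (\<Sum>k<d. \<Sum>p<d. \<Sum>q<d.
       (if q = b then (if (k = k1 \<and> p = k2) \<or> (k = k2 \<and> p = k1) then V k * attA a Q K p q else 0) else 0)) else 0))"
    by (intro sum.cong refl) (cases "m = n"; simp)
  also have "\<dots> = (\<Sum>k<d. \<Sum>p<d. \<Sum>q<d.
       (if q = b then (if (k = k1 \<and> p = k2) \<or> (k = k2 \<and> p = k1) then V k * attA a Q K p q else 0) else 0))"
    using assms by (simp only: sum.delta finite_lessThan) simp
  also have "\<dots> = (\<Sum>k<d. \<Sum>p<d. (if (k = k1 \<and> p = k2) \<or> (k = k2 \<and> p = k1) then V k * attA a Q K p b else 0))"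
    using assms by (intro sum.cong refl) (simp only: sum.delta finite_lessThan, simp)
  also have "\<dots> = (if k1 = k2 then V k1 * attA a Q K k1 b else V k1 * attA a Q K k2 b + V k2 * attA a Q K k1 b)"
  proof (cases "k1 = k2")
    case True
    have "(\<Sum>p<d. (if (k = k1 \<and> p = k2) \<or> (k = k2 \<and> p = k1) then V k * attA a Q K p b else 0))
      = (if k = k1 then V k1 * attA a Q K k1 b else 0)" for k
      using assms True by (cases "k = k1"; simp)
    then show ?thesis using assms True by simp
  next
    case False
    have "(\<Sum>p<d. (if (k = k1 \<and> p = k2) \<or> (k = k2 \<and> p = k1) then V k * attA a Q K p b else 0))
      = (if k = k1 then V k1 * attA a Q K k2 b else 0) + (if k = k2 then V k2 * attA a Q K k1 b else 0)" for k
      using assms False by (cases "k = k1"; cases "k = k2"; simp)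
    then show ?thesis using assms False by (simp add: sum.distrib)
  qed
  finally show ?thesis .
qed


lemma card_perm2: "real (card (permutations_of_multiset {#k1,k2#})) = (if k1 = k2 then 1 else 2)"
  by (simp add: permutations_of_multiset_doubleton)

lemma y_val:
  assumes "n \<noteq> j" "n < t" "k1 < d" "k2 < d" "b < d"
  shows "y_coef a d t Q K V n j {#k1,k2#} b = (\<Sum>i<a. ((V k1 * K i k2 + V k2 * K i k1) / 2) * Q i b)"
proof -
  have r: "(\<Sum>i<a. ((V k1 * K i k2 + V k2 * K i k1) / 2) * Q i b) = (V k1 * attA a Q K k2 b + V k2 * attA a Q K k1 b) / 2"
    unfolding attA_def sum_distrib_left sum.distrib[symmetric] sum_divide_distrib
    by (rule sum.cong) (simp_all add: field_simps)
  show ?thesis unfolding r y_coef_def c_coef_val[OF assms] card_perm2 by simp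
qed

definition pl :: "nat \<Rightarrow> (nat \<times> nat) list" where
  "pl d = concat (map (\<lambda>k1. map (\<lambda>k2. (k1, k2)) [k1..<d]) [0..<d])"

lemma mult2_pl: "mult2_list d = map (\<lambda>(x,y). {#x,y#}) (pl d)"
  by (simp add: mult2_list_def pl_def map_concat comp_def)

lemma pl_set: "(x,y) \<in> set (pl d) \<Longrightarrow> x < d \<and> y < d"
  by (auto simp: pl_def)

definition kk1 where "kk1 d r = fst (pl d ! r)"
definition kk2 where "kk2 d r = snd (pl d ! r)"

lemma mult2_nth:
  assumes "r < length (mult2_list d)"
  shows "mult2_list d ! r = {#kk1 d r, kk2 d r#} \<and> kk1 d r < d \<and> kk2 d r < d"
proof -
  have r: "r < length (pl d)" using assms by (simp add: mult2_pl)
  then have "pl d ! r \<in> set (pl d)" by simp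
  then have "kk1 d r < d \<and> kk2 d r < d" unfolding kk1_def kk2_def using pl_set
    by (metis prod.collapse)
  moreover have "mult2_list d ! r = {#kk1 d r, kk2 d r#}" using r
    by (simp add: mult2_pl kk1_def kk2_def split: prod.splits)
  ultimately show ?thesis by simp
qed

lemma Fmat_entry:
  assumes "n \<noteq> j" "n < t" "j < t" "r < length (mult2_list d)" "c < d"
  shows "Fmat d n j (mu a d t (Q, K, V)) $$ (r, c) =
    (\<Sum>i<a. ((V (kk1 d r) * K i (kk2 d r) + V (kk2 d r) * K i (kk1 d r)) / 2) * Q i c)"
proof -
  have m: "mult2_list d ! r = {#kk1 d r, kk2 d r#}" "kk1 d r < d" "kk2 d r < d"
    using mult2_nth[OF assms(4)] by auto
  have "(n, j, mult2_list d ! r, c) \<in> coords d t"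
    using assms m by (auto simp: coords_def Mult2_def)
  then show ?thesis using assms m
    by (simp add: Fmat_def mu_def y_val)
qed

lemma Fmat_carrier: "Fmat d n j p \<in> carrier_mat (length (mult2_list d)) d"
  by (simp add: Fmat_def)

theorem mainTheorem10:
  fixes a d t n j :: nat
  assumes "t \<ge> 2" and "a < d" and "n < t" and "j < t" and "n \<noteq> j"
  shows "(\<forall>W. vec_space.rank (length (mult2_list d)) (Fmat d n j (mu a d t W)) \<le> a)
       \<and> (\<forall>p \<in> attention_variety a d t. \<forall>I J.
            I \<subseteq> {..<length (mult2_list d)} \<longrightarrow> J \<subseteq> {..<d} \<longrightarrow>
            card I = a + 1 \<longrightarrow> card J = a + 1 \<longrightarrow>
            det (submatrix (Fmat d n j p) I J) = 0)"
proof (intro conjI allI ballI impI)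
  fix W :: "(nat \<Rightarrow> nat \<Rightarrow> real) \<times> (nat \<Rightarrow> nat \<Rightarrow> real) \<times> (nat \<Rightarrow> real)"
  obtain Q K V where W: "W = (Q, K, V)" by (cases W) auto
  show "vec_space.rank (length (mult2_list d)) (Fmat d n j (mu a d t W)) \<le> a"
    unfolding W
    by (rule rank_sum_le[OF Fmat_carrier, where f = "\<lambda>i r. (V (kk1 d r) * K i (kk2 d r) + V (kk2 d r) * K i (kk1 d r)) / 2"
          and g = Q]) (rule Fmat_entry[OF assms(5,3,4)]; assumption)
next
  fix p I J
  assume p: "p \<in> attention_variety a d t"
    and I: "I \<subseteq> {..<length (mult2_list d)}" and J: "J \<subseteq> {..<d}"
    and cI: "card I = a + 1" and cJ: "card J = a + 1"
  let ?L = "length (mult2_list d)"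
  have eI: "{i. i < ?L \<and> i \<in> I} = I" using I by auto
  have eJ: "{i. i < d \<and> i \<in> J} = J" using J by auto
  define M where "M x = submatrix (Fmat d n j x) I J" for x :: "coord \<Rightarrow> real"
  have dimM: "dim_row (M x) = a + 1" "dim_col (M x) = a + 1" for x
    unfolding M_def dim_submatrix using eI eJ cI cJ by (simp_all add: Fmat_def)
  have entM: "M x $$ (i, k) = x (n, j, mult2_list d ! pick I i, pick J k)" if "i < a + 1" "k < a + 1" for x i k
  proof -
    have "pick I i < ?L" using pick_le[of i ?L I] that eI cI by simp
    moreover have "pick J k < d" using pick_le[of k d J] that eJ cJ by simp
    ultimately show ?thesis unfolding M_def using that eI eJ cI cJ
      by (simp add: submatrix_index Fmat_def)
  qed
  have "\<exists>f. \<forall>x. det (M x) = mpoly_eval f x"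
  proof (rule det_poly[OF dimM])
    fix i k assume ik: "i < a + 1" "k < a + 1"
    show "\<exists>f. \<forall>x. M x $$ (i, k) = mpoly_eval f x"
      by (intro exI[of _ "mvar (n, j, mult2_list d ! pick I i, pick J k)"]) (simp add: entM[OF ik])
  qed
  then obtain f where f: "\<And>x. det (M x) = mpoly_eval f x" by blast
  have "mpoly_eval f x = 0" if xr: "x \<in> range (mu a d t)" for x
  proof -
    obtain W where xW: "x = mu a d t W" using xr by blast
    obtain Q K V where W: "W = (Q, K, V)" by (cases W) auto
    have x: "x = mu a d t (Q, K, V)" using xW W by simp
    have "det (M x) = 0"
    proof (rule det_sum_zero[where f = "\<lambda>i r. (V (kk1 d (pick I r)) * K i (kk2 d (pick I r)) + V (kk2 d (pick I r)) * K i (kk1 d (pick I r))) / 2"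
          and g = "\<lambda>i c. Q i (pick J c)"])
      show "M x \<in> carrier_mat (Suc a) (Suc a)" by (rule carrier_matI) (simp_all only: dimM Suc_eq_plus1)
    next
      fix r c assume rc: "r < Suc a" "c < Suc a"
      have "pick I r < ?L" using pick_le[of r ?L I] rc eI cI by simp
      moreover have "pick J c < d" using pick_le[of c d J] rc eJ cJ by simp
      ultimately have pr: "pick I r < ?L" "pick J c < d" by auto
      have "M x $$ (r, c) = Fmat d n j x $$ (pick I r, pick J c)"
        unfolding M_def by (rule submatrix_index) (use rc eI eJ cI cJ in \<open>simp_all add: Fmat_def\<close>)
      also have "\<dots> = (\<Sum>i<a. ((V (kk1 d (pick I r)) * K i (kk2 d (pick I r)) + V (kk2 d (pick I r)) * K i (kk1 d (pick I r))) / 2) * Q i (pick J c))"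
        unfolding x by (rule Fmat_entry[OF assms(5,3,4) pr])
      finally show "M x $$ (r, c) = (\<Sum>i<a. ((V (kk1 d (pick I r)) * K i (kk2 d (pick I r)) + V (kk2 d (pick I r)) * K i (kk1 d (pick I r))) / 2) * Q i (pick J c))" .
    qed
    then show ?thesis using f by simp
  qed
  then have "mpoly_eval f p = 0" using p unfolding attention_variety_def zariski_closure_def by blast
  then show "det (submatrix (Fmat d n j p) I J) = 0" using f[of p] unfolding M_def by simp
qed

end
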